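(* Let $h>0$ and $\mathcal{X}=(h,\infty)$. Let $\mathcal{L}:\mathcal{X}\to\mathbb{R}$ be real-analytic, bounded below and proper (coercive), with $\underline{\mathcal{L}}:=\inf_{k\in\mathcal{X}}\mathcal{L}(k)$, such that $\limsup_{k\to\infty}\mathcal{L}'(k)$ is finite and such that $\mathcal{L}$ satisfies a saturated Polyak–Łojasiewicz inequality: there exist $a,b>0$ with $$|\mathcal{L}'(k)|\ \ge\ \sqrt{\frac{a(\mathcal{L}(k)-\underline{\mathcal{L}})}{b+(\mathcal{L}(k)-\underline{\mathcal{L}})}}\qquad\text{for all }k\in\mathcal{X}.$$ Define $f(k):=\mathcal{L}(k^2)$ for $k>\sqrt{h}$, and $\underline{f}:=\inf_{k>\sqrt{h}}f(k)$ (so $\underline f=\underline{\mathcal{L}}$). Then for every $\epsilon>\sqrt{h}$ there exists $\mu_\epsilon>0$ such that $$|f'(k)|\ \ge\ \sqrt{\mu_\epsilon\,(f(k)-\underline{f})}\qquad\text{for all }k\in[\epsilon,\infty).$$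
   Context: "Proper" means coercive/radially unbounded on the open domain $\mathcal{X}$ (sublevel sets are compact in $\mathcal{X}$); since $\mathcal{L}$ is bounded below and proper, its infimum is attained. *)

theory Defs
  imports "HOL-Analysis.Analysis"
begin

definition real_analytic_on :: "(real \<Rightarrow> real) \<Rightarrow> real set \<Rightarrow> bool" where
  "real_analytic_on g S \<longleftrightarrow>
     (\<forall>x\<in>S. \<exists>r>0. \<exists>c::nat \<Rightarrow> real.
        \<forall>y. \<bar>y - x\<bar> < r \<longrightarrow> y \<in> S \<and> (\<lambda>n. c n * (y - x) ^ n) sums g y)"

definition proper_on :: "(real \<Rightarrow> real) \<Rightarrow> real set \<Rightarrow> bool" where
  "proper_on g S \<longleftrightarrow> (\<forall>c. compact {k \<in> S. g k \<le> c})"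

end

theory Submission
  imports Defs
begin

lemma analytic_diff:
  assumes "real_analytic_on L S" "x \<in> S"
  shows "L differentiable at x"
proof -
  obtain r c where r: "r > 0" and hc: "\<And>y. \<bar>y - x\<bar> < r \<Longrightarrow> y \<in> S \<and> (\<lambda>n. c n * (y - x) ^ n) sums L y"
    using assms unfolding real_analytic_on_def by blast
  define p where "p = (\<lambda>z::real. \<Sum>n. c n * z ^ n)"
  have "\<And>z. norm z < r \<Longrightarrow> summable (\<lambda>n. c n * z ^ n)"
  proof -
    fix z :: real assume "norm z < r"
    then have "\<bar>(x + z) - x\<bar> < r" by simp
    from hc[OF this] show "summable (\<lambda>n. c n * z ^ n)" by (auto simp: sums_iff)
  qed
  from termdiffs_strong'[of r c 0, OF this] r
  have d0: "(p has_field_derivative (\<Sum>n. diffs c n * 0^n)) (at 0)" unfolding p_def by simp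
  have "((\<lambda>y. p (y - x)) has_field_derivative (\<Sum>n. diffs c n * 0^n)) (at x)"
  proof -
    have d1: "((\<lambda>y. y - x) has_real_derivative 1) (at x)" by (auto intro!: derivative_eq_intros)
    have d0': "(p has_field_derivative (\<Sum>n. diffs c n * 0^n)) (at (x - x))" using d0 by simp
    show ?thesis using DERIV_chain2[OF d0' d1] by simp
  qed
  moreover have "\<And>y. y \<in> ball x r \<Longrightarrow> p (y - x) = L y"
  proof -
    fix y assume "y \<in> ball x r"
    then have "\<bar>y - x\<bar> < r" by (simp add: dist_real_def abs_minus_commute)
    from hc[OF this] show "p (y - x) = L y" unfolding p_def by (simp add: sums_iff)
  qed
  ultimately have "(L has_field_derivative (\<Sum>n. diffs c n * 0^n)) (at x)"
    using has_field_derivative_transform_within_open[of _ _ x "ball x r" L] r by auto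
  then show ?thesis using real_differentiable_def by blast
qed


theorem theorem1:
  fixes h a b :: real and L :: "real \<Rightarrow> real"
  assumes h_pos: "h > 0"
    and analytic: "real_analytic_on L {h<..}"
    and bdd_below: "bdd_below (L ` {h<..})"
    and proper: "proper_on L {h<..}"
    and limsup_fin: "Limsup at_top (\<lambda>k. ereal (deriv L k)) \<noteq> \<infinity>"
                    "Limsup at_top (\<lambda>k. ereal (deriv L k)) \<noteq> -\<infinity>"
    and ab: "a > 0" "b > 0"
    and PL: "\<And>k. k > h \<Longrightarrow>
      \<bar>deriv L k\<bar> \<ge> sqrt (a * (L k - Inf (L ` {h<..})) / (b + (L k - Inf (L ` {h<..}))))"
  shows "\<forall>\<epsilon> > sqrt h. \<exists>\<mu> > 0. \<forall>k \<ge> \<epsilon>.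
           \<bar>deriv (\<lambda>t. L (t ^ 2)) k\<bar>
             \<ge> sqrt (\<mu> * (L (k ^ 2) - Inf ((\<lambda>t. L (t ^ 2)) ` {sqrt h<..})))"
proof (intro allI impI)
  fix \<epsilon> :: real assume eps: "\<epsilon> > sqrt h"
  define Li where "Li = Inf (L ` {h<..})"
  have dL: "\<And>x. x > h \<Longrightarrow> (L has_real_derivative deriv L x) (at x)"
    using analytic_diff[OF analytic] DERIV_deriv_iff_real_differentiable by auto
  have Lge: "\<And>x. x > h \<Longrightarrow> Li \<le> L x"
    unfolding Li_def using bdd_below by (auto intro: cInf_lower)
  have img: "(\<lambda>t. t ^ 2) ` {sqrt h<..} = {h<..}"
  proof
    show "(\<lambda>t. t ^ 2) ` {sqrt h<..} \<subseteq> {h<..}"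
    proof
      fix y assume "y \<in> (\<lambda>t. t ^ 2) ` {sqrt h<..}"
      then obtain t where t: "t > sqrt h" "y = t^2" by auto
      have "sqrt h ^ 2 < t ^ 2" using t h_pos by (intro power_strict_mono) auto
      then show "y \<in> {h<..}" using t h_pos by simp
    qed
  next
    show "{h<..} \<subseteq> (\<lambda>t. t ^ 2) ` {sqrt h<..}"
    proof
      fix y assume "y \<in> {h<..}"
      then have y: "y > h" by simp
      have "sqrt y > sqrt h" using y by simp
      moreover have "y = (sqrt y)^2" using y h_pos by simp
      ultimately show "y \<in> (\<lambda>t. t ^ 2) ` {sqrt h<..}" by blast
    qed
  qed
  have finf: "Inf ((\<lambda>t. L (t ^ 2)) ` {sqrt h<..}) = Li"
  proof -
    have "(\<lambda>t. L (t ^ 2)) ` {sqrt h<..} = L ` {h<..}" by (simp only: img[symmetric] image_image)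
    then show ?thesis unfolding Li_def by simp
  qed
  obtain M0 where M0: "Limsup at_top (\<lambda>k. ereal (deriv L k)) < ereal M0"
    using limsup_fin(1) by (cases "Limsup at_top (\<lambda>k. ereal (deriv L k))") (auto, meson less_add_one)
  define M where "M = max M0 1"
  have Mpos: "M > 0" unfolding M_def by simp
  have "eventually (\<lambda>x. ereal (deriv L x) < ereal M0) at_top"
    using Limsup_lessD[OF M0] .
  then obtain X0 where X0: "\<And>x. x \<ge> X0 \<Longrightarrow> deriv L x \<le> M"
    unfolding eventually_at_top_linorder M_def by force
  define e2 where "e2 = \<epsilon>^2"
  have epos: "\<epsilon> > 0" using eps h_pos by (meson less_le_trans real_sqrt_ge_zero less_imp_le not_le)
  have e2h: "e2 > h" using img eps unfolding e2_def by auto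
  define X where "X = max X0 e2"
  have cont: "continuous_on {e2..X} L"
  proof (intro continuous_at_imp_continuous_on ballI)
    fix x assume "x \<in> {e2..X}"
    then have "x > h" using e2h by auto
    from DERIV_isCont[OF dL[OF this]] show "isCont L x" .
  qed
  have "compact (L ` {e2..X})" using cont by (intro compact_continuous_image) auto
  then obtain B where B: "\<And>x. x \<in> {e2..X} \<Longrightarrow> L x \<le> B"
    using compact_imp_bounded bounded_real by (metis abs_le_D1 image_eqI)
  have grow: "L x \<le> B + M * x" if x: "x \<ge> e2" for x
  proof (cases "x \<le> X")
    case True
    then have "L x \<le> B" using B x by auto
    moreover have "M * x \<ge> 0" using Mpos x e2h h_pos by auto
    ultimately show ?thesis by linarith
  next
    case False
    have "X < x" using False by simp
    moreover have "\<forall>t. X \<le> t \<and> t \<le> x \<longrightarrow> DERIV L t :> deriv L t"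
      using dL e2h unfolding X_def by (auto intro!: dL)
    ultimately obtain z where z: "X < z" "z < x" "L x - L X = (x - X) * deriv L z"
      using MVT2[of X x L "deriv L"] by blast
    have "deriv L z \<le> M" using z X0 unfolding X_def by auto
    have "(x - X) * deriv L z \<le> (x - X) * M" by (rule mult_left_mono) (use z \<open>deriv L z \<le> M\<close> in auto)
    moreover have "L X \<le> B" using B e2h unfolding X_def by auto
    moreover have "X \<ge> 0" using e2h h_pos unfolding X_def by auto
    ultimately have "L x \<le> B + M * x - M * X" using z by (simp add: algebra_simps)
    then show ?thesis using Mpos \<open>X \<ge> 0\<close> by (smt (verit) mult_nonneg_nonneg)
  qed
  define C where "C = max 0 (B - Li)"
  have Cnn: "C \<ge> 0" unfolding C_def by simp
  define \<mu> where "\<mu> = 2 * a * min (e2 / (b + C)) (1 / M)"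
  have e2pos: "e2 > 0" using e2h h_pos by simp
  have mupos: "\<mu> > 0" unfolding \<mu>_def using ab Mpos e2pos Cnn by auto
  show "\<exists>\<mu> > 0. \<forall>k \<ge> \<epsilon>. \<bar>deriv (\<lambda>t. L (t ^ 2)) k\<bar>
             \<ge> sqrt (\<mu> * (L (k ^ 2) - Inf ((\<lambda>t. L (t ^ 2)) ` {sqrt h<..})))"
  proof (intro exI[of _ \<mu>] conjI allI impI mupos)
    fix k assume k: "k \<ge> \<epsilon>"
    have kpos: "k > 0" using k epos by simp
    have k2: "k^2 \<ge> e2" unfolding e2_def using k epos by (intro power_mono) auto
    have k2h: "k^2 > h" using k2 e2h by simp
    have "((\<lambda>t. L (t ^ 2)) has_real_derivative deriv L (k^2) * (2 * k)) (at k)"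
    proof -
      have d2: "((\<lambda>t. t^2) has_real_derivative 2*k) (at k)" by (auto intro!: derivative_eq_intros)
      have d3: "(L has_real_derivative deriv L (k^2)) (at ((\<lambda>t. t^2) k))" using dL[OF k2h] by simp
      show ?thesis using DERIV_chain2[OF d3 d2] by simp
    qed
    then have df: "deriv (\<lambda>t. L (t ^ 2)) k = deriv L (k^2) * (2 * k)"
      by (rule DERIV_imp_deriv)
    define D where "D = L (k^2) - Li"
    have Dnn: "D \<ge> 0" unfolding D_def using Lge[OF k2h] by simp
    have Dle: "D \<le> C + M * k^2" unfolding D_def C_def using grow[OF k2] by auto
    have m1: "\<mu> * (b + C) \<le> 2 * a * k^2"
    proof -
      have "\<mu> * (b + C) \<le> 2 * a * (e2 / (b + C)) * (b + C)"
      proof (rule mult_right_mono)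
        show "\<mu> \<le> 2 * a * (e2 / (b + C))" unfolding \<mu>_def by (rule mult_left_mono) (use ab in auto)
      qed (use ab Cnn in auto)
      also have "\<dots> = 2 * a * e2" using ab Cnn by simp
      also have "\<dots> \<le> 2 * a * k^2" using k2 ab by simp
      finally show ?thesis .
    qed
    have m2: "\<mu> * (M * k^2) \<le> 2 * a * k^2"
    proof -
      have "\<mu> * (M * k^2) \<le> 2 * a * (1 / M) * (M * k^2)"
      proof (rule mult_right_mono)
        show "\<mu> \<le> 2 * a * (1 / M)" unfolding \<mu>_def by (rule mult_left_mono) (use ab in auto)
      qed (use Mpos in auto)
      also have "\<dots> = 2 * a * k^2" using Mpos by simp
      finally show ?thesis .
    qed
    have key: "\<mu> * (b + D) \<le> 4 * k^2 * a"
    proof -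
      have "\<mu> * (b + D) \<le> \<mu> * (b + C + M * k^2)"
        by (rule mult_left_mono) (use Dle mupos in auto)
      also have "\<dots> \<le> 4 * k^2 * a" using m1 m2 by (simp add: algebra_simps)
      finally show ?thesis .
    qed
    have bD: "b + D > 0" using ab Dnn by simp
    have "\<mu> * D \<le> 4 * k^2 * (a * D / (b + D))"
    proof -
      have "\<mu> * D * (b + D) \<le> 4 * k^2 * a * D"
        using mult_right_mono[OF key Dnn] by (simp add: algebra_simps)
      then show ?thesis using bD by (simp add: field_simps)
    qed
    also have "\<dots> = (2 * k)^2 * (sqrt (a * D / (b + D)))^2"
      using ab Dnn bD by (simp add: power_mult_distrib)
    also have "\<dots> = (2 * k * sqrt (a * D / (b + D)))^2" by (simp add: power_mult_distrib)
    finally have sq: "\<mu> * D \<le> (2 * k * sqrt (a * D / (b + D)))^2" .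
    have "sqrt (\<mu> * D) \<le> 2 * k * sqrt (a * D / (b + D))"
    proof -
      note sq
      then have "sqrt (\<mu> * D) \<le> sqrt ((2 * k * sqrt (a * D / (b + D)))^2)" by (rule real_sqrt_le_mono)
      also have "\<dots> = 2 * k * sqrt (a * D / (b + D))" using kpos ab Dnn bD by (subst real_sqrt_abs) (intro abs_of_nonneg mult_nonneg_nonneg, auto)
      finally show ?thesis .
    qed
    also have "\<dots> \<le> 2 * k * \<bar>deriv L (k^2)\<bar>"
      by (rule mult_left_mono) (use PL[OF k2h] kpos in \<open>auto simp: D_def Li_def\<close>)
    also have "\<dots> = \<bar>deriv (\<lambda>t. L (t ^ 2)) k\<bar>" using kpos by (simp add: df abs_mult)
    finally show "\<bar>deriv (\<lambda>t. L (t ^ 2)) k\<bar>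
             \<ge> sqrt (\<mu> * (L (k ^ 2) - Inf ((\<lambda>t. L (t ^ 2)) ` {sqrt h<..})))"
      unfolding finf D_def .
  qed
qed

end
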